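(* There exist a finite family $\mathcal{F}$ of pairwise intersecting compact convex sets in the plane with the $(4,3)$ property (among any four distinct members some three have a common point) and a member $D\in\mathcal{F}$ such that the directed graph $G_D$ contains a directed cycle of length 5.
   Context: For three pairwise intersecting compact convex sets $X,Y,Z$ in the plane: $o(XYZ)=0$ if $X\cap Y\cap Z\neq\emptyset$; otherwise $o(XYZ)=o(xyz)$ for any $x\in Y\cap Z$, $y\in X\cap Z$, $z\in X\cap Y$, where for points $o(xyz)=+1$ for a counterclockwise and $-1$ for a clockwise triangle (independent of the choice). For $D\in\mathcal{F}$, $G_D$ is the directed graph on vertex set $\mathcal{F}\setminus\{D\}$ with an arc from $A$ to $B$ if and only if $o(ABD)=1$. *)

theory Defs
  imports "HOL-Analysis.Analysis"
begin

definition orient_pts :: "real^2 \<Rightarrow> real^2 \<Rightarrow> real^2 \<Rightarrow> int" where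
  "orient_pts x y z =
     (let d = (y$1 - x$1) * (z$2 - x$2) - (y$2 - x$2) * (z$1 - x$1)
      in if d > 0 then 1 else if d < 0 then -1 else 0)"

text \<open>Orientation of three pairwise intersecting sets: 0 if they share a point,
  otherwise the orientation of chosen points x in Y\<inter>Z, y in X\<inter>Z, z in X\<inter>Y
  (the paper shows this is independent of the choice).\<close>

definition orient_sets :: "(real^2) set \<Rightarrow> (real^2) set \<Rightarrow> (real^2) set \<Rightarrow> int" where
  "orient_sets X Y Z =
     (if X \<inter> Y \<inter> Z \<noteq> {} then 0
      else orient_pts (SOME x. x \<in> Y \<inter> Z) (SOME y. y \<in> X \<inter> Z) (SOME z. z \<in> X \<inter> Y))"

definition arc_G :: "(real^2) set set \<Rightarrow> (real^2) set \<Rightarrow> (real^2) set \<Rightarrow> (real^2) set \<Rightarrow> bool" where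
  "arc_G F D A B \<longleftrightarrow> A \<in> F - {D} \<and> B \<in> F - {D} \<and> orient_sets A B D = 1"

definition pairwise_intersecting :: "'a set set \<Rightarrow> bool" where
  "pairwise_intersecting F \<longleftrightarrow> (\<forall>A\<in>F. \<forall>B\<in>F. A \<inter> B \<noteq> {})"

definition prop_43 :: "'a set set \<Rightarrow> bool" where
  "prop_43 F \<longleftrightarrow> (\<forall>G \<subseteq> F. card G = 4 \<longrightarrow>
      (\<exists>H \<subseteq> G. card H = 3 \<and> \<Inter>H \<noteq> {}))"

end

theory Submission
  imports Defs
begin

definition poly :: "(real*real*real) list \<Rightarrow> (real^2) set" where
  "poly L = {p. \<forall>(a,b,c)\<in>set L. a*p$1 + b*p$2 \<le> c}"

definition box :: "(real*real*real) list" where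
  "box = [(1,0,150),(-1,0,150),(0,1,150),(0,-1,150)]"

lemma poly_eq: "poly L = (\<Inter>(a,b,c)\<in>set L. {p. a*p$1 + b*p$2 \<le> c})"
  unfolding poly_def by auto

lemma closed_poly: "closed (poly L)"
  unfolding poly_eq
  by (intro closed_INT ballI, clarsimp, intro closed_Collect_le continuous_intros)

lemma convex_half: "convex {p::real^2. a*p$1 + b*p$2 \<le> c}"
proof -
  have "{p::real^2. a*p$1 + b*p$2 \<le> c} = {p. inner (vector[a,b]) p \<le> c}"
    by (simp add: inner_vec_def sum_2)
  then show ?thesis by (simp add: convex_halfspace_le)
qed

lemma convex_poly: "convex (poly L)"
  unfolding poly_eq by (intro convex_INT ballI, clarsimp simp: convex_half)

lemma bounded_poly: "bounded (poly (L @ box))"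
proof -
  have "poly (L @ box) \<subseteq> cbox (vector[-150,-150]) (vector[150,150])"
    by (auto simp: poly_def box_def mem_box_cart forall_2)
  then show ?thesis using bounded_cbox bounded_subset by blast
qed

lemma compact_poly: "compact (poly (L @ box))"
  using bounded_poly closed_poly compact_eq_bounded_closed by blast

lemma key:
  fixes x1 x2 y1 y2 z1 z2 :: real
  assumes "pa*x1+pb*x2 = pc" "qa*y1+qb*y2 = qc" "qa*x1+qb*x2 < qc" "pa*y1+pb*y2 < pc"
    "pa*z1+pb*z2 \<ge> pc" "qa*z1+qb*z2 \<ge> qc" "pa*qb - pb*qa < 0"
  shows "(y1-x1)*(z2-x2) - (y2-x2)*(z1-x1) > 0"
proof -
  define u1 where "u1 = qa*x1+qb*x2-qc"
  define u2 where "u2 = pa*y1+pb*y2-pc"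
  define u3 where "u3 = qa*z1+qb*z2-qc"
  define u4 where "u4 = pa*z1+pb*z2-pc"
  have id: "((y1-x1)*(z2-x2) - (y2-x2)*(z1-x1)) * (pa*qb - pb*qa) = -(u1*u2 - u2*u3 - u1*u4)"
  proof -
    have pc: "pc = pa*x1+pb*x2" and qc: "qc = qa*y1+qb*y2" using assms(1,2) by auto
    show ?thesis unfolding u1_def u2_def u3_def u4_def pc qc by algebra
  qed
  have "u1 < 0" "u2 < 0" "u3 \<ge> 0" "u4 \<ge> 0" using assms unfolding u1_def u2_def u3_def u4_def by auto
  then have "u1*u2 > 0" "u2*u3 \<le> 0" "u1*u4 \<le> 0"
    by (auto simp: mult_neg_neg mult_nonpos_nonneg mult_nonneg_nonpos)
  then have "((y1-x1)*(z2-x2) - (y2-x2)*(z1-x1)) * (pa*qb - pb*qa) < 0" using id by linarith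
  then show ?thesis using assms(7) by (simp add: mult_less_0_iff)
qed

lemma orient_sets_pos:
  assumes "X \<inter> Y \<inter> Z = {}" "Y \<inter> Z \<noteq> {}" "X \<inter> Z \<noteq> {}" "X \<inter> Y \<noteq> {}"
    "\<And>x y z. x \<in> Y \<inter> Z \<Longrightarrow> y \<in> X \<inter> Z \<Longrightarrow> z \<in> X \<inter> Y \<Longrightarrow>
       (y$1 - x$1) * (z$2 - x$2) - (y$2 - x$2) * (z$1 - x$1) > 0"
  shows "orient_sets X Y Z = 1"
proof -
  have "(SOME x. x \<in> Y \<inter> Z) \<in> Y \<inter> Z" using assms(2) by (meson ex_in_conv someI_ex)
  moreover have "(SOME x. x \<in> X \<inter> Z) \<in> X \<inter> Z" using assms(3) by (meson ex_in_conv someI_ex)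
  moreover have "(SOME x. x \<in> X \<inter> Y) \<in> X \<inter> Y" using assms(4) by (meson ex_in_conv someI_ex)
  ultimately show ?thesis using assms(1) assms(5) unfolding orient_sets_def orient_pts_def Let_def
    by auto
qed

definition Dset :: "(real^2) set" where "Dset = poly ([(2,3,126),(-2,3,126),(-3,-1,112),(0,-4,112),(3,-1,112)] @ box)"
definition A0 :: "(real^2) set" where "A0 = poly ([(-2,-3,-126)] @ box)"
definition A1 :: "(real^2) set" where "A1 = poly ([(3,1,-112)] @ box)"
definition A2 :: "(real^2) set" where "A2 = poly ([(-3,1,-112)] @ box)"
definition A3 :: "(real^2) set" where "A3 = poly ([(2,-3,-126)] @ box)"
definition A4 :: "(real^2) set" where "A4 = poly ([(0,4,-112)] @ box)"

definition S :: "nat \<Rightarrow> (real^2) set" where "S i = [Dset, A0, A1, A2, A3, A4] ! i"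

lemmas mems = poly_def box_def Dset_def A0_def A1_def A2_def A3_def A4_def

lemma S_simps: "S 0 = Dset" "S 1 = A0" "S (Suc 0) = A0" "S 2 = A1" "S 3 = A2" "S 4 = A3" "S 5 = A4"
  by (simp_all add: S_def numeral_eq_Suc)

lemma six: "{0..<6::nat} = {0,1,2,3,4,5}" by auto

lemma ne_0_1: "S 0 \<noteq> S 1"
proof
  assume "S 0 = S 1"
  moreover have "(vector[-42,14] :: real^2) \<in> S 0" "(vector[-42,14] :: real^2) \<notin> S 1" by (simp_all add: S_simps mems)
  ultimately show False by simp
qed

lemma ne_0_2: "S 0 \<noteq> S 2"
proof
  assume "S 0 = S 2"
  moreover have "(vector[42,14] :: real^2) \<in> S 0" "(vector[42,14] :: real^2) \<notin> S 2" by (simp_all add: S_simps mems)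
  ultimately show False by simp
qed

lemma ne_0_3: "S 0 \<noteq> S 3"
proof
  assume "S 0 = S 3"
  moreover have "(vector[0,42] :: real^2) \<in> S 0" "(vector[0,42] :: real^2) \<notin> S 3" by (simp_all add: S_simps mems)
  ultimately show False by simp
qed

lemma ne_0_4: "S 0 \<noteq> S 4"
proof
  assume "S 0 = S 4"
  moreover have "(vector[42,14] :: real^2) \<in> S 0" "(vector[42,14] :: real^2) \<notin> S 4" by (simp_all add: S_simps mems)
  ultimately show False by simp
qed

lemma ne_0_5: "S 0 \<noteq> S 5"
proof
  assume "S 0 = S 5"
  moreover have "(vector[42,14] :: real^2) \<in> S 0" "(vector[42,14] :: real^2) \<notin> S 5" by (simp_all add: S_simps mems)
  ultimately show False by simp
qed

lemma ne_1_2: "S 1 \<noteq> S 2"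
proof
  assume "S 1 = S 2"
  moreover have "(vector[42,14] :: real^2) \<in> S 1" "(vector[42,14] :: real^2) \<notin> S 2" by (simp_all add: S_simps mems)
  ultimately show False by simp
qed

lemma ne_1_3: "S 1 \<noteq> S 3"
proof
  assume "S 1 = S 3"
  moreover have "(vector[0,42] :: real^2) \<in> S 1" "(vector[0,42] :: real^2) \<notin> S 3" by (simp_all add: S_simps mems)
  ultimately show False by simp
qed

lemma ne_1_4: "S 1 \<noteq> S 4"
proof
  assume "S 1 = S 4"
  moreover have "(vector[42,14] :: real^2) \<in> S 1" "(vector[42,14] :: real^2) \<notin> S 4" by (simp_all add: S_simps mems)
  ultimately show False by simp
qed

lemma ne_1_5: "S 1 \<noteq> S 5"
proof
  assume "S 1 = S 5"
  moreover have "(vector[42,14] :: real^2) \<in> S 1" "(vector[42,14] :: real^2) \<notin> S 5" by (simp_all add: S_simps mems)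
  ultimately show False by simp
qed

lemma ne_2_3: "S 2 \<noteq> S 3"
proof
  assume "S 2 = S 3"
  moreover have "(vector[42,14] :: real^2) \<in> S 3" "(vector[42,14] :: real^2) \<notin> S 2" by (simp_all add: S_simps mems)
  ultimately show False by simp
qed

lemma ne_2_4: "S 2 \<noteq> S 4"
proof
  assume "S 2 = S 4"
  moreover have "(vector[0,42] :: real^2) \<in> S 4" "(vector[0,42] :: real^2) \<notin> S 2" by (simp_all add: S_simps mems)
  ultimately show False by simp
qed

lemma ne_2_5: "S 2 \<noteq> S 5"
proof
  assume "S 2 = S 5"
  moreover have "(vector[-42,14] :: real^2) \<in> S 2" "(vector[-42,14] :: real^2) \<notin> S 5" by (simp_all add: S_simps mems)
  ultimately show False by simp
qed

lemma ne_3_4: "S 3 \<noteq> S 4"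
proof
  assume "S 3 = S 4"
  moreover have "(vector[42,14] :: real^2) \<in> S 3" "(vector[42,14] :: real^2) \<notin> S 4" by (simp_all add: S_simps mems)
  ultimately show False by simp
qed

lemma ne_3_5: "S 3 \<noteq> S 5"
proof
  assume "S 3 = S 5"
  moreover have "(vector[42,14] :: real^2) \<in> S 3" "(vector[42,14] :: real^2) \<notin> S 5" by (simp_all add: S_simps mems)
  ultimately show False by simp
qed

lemma ne_4_5: "S 4 \<noteq> S 5"
proof
  assume "S 4 = S 5"
  moreover have "(vector[0,42] :: real^2) \<in> S 4" "(vector[0,42] :: real^2) \<notin> S 5" by (simp_all add: S_simps mems)
  ultimately show False by simp
qed

lemma injS: "inj_on S {0..<6}"
  unfolding inj_on_def six using ne_0_1 ne_0_2 ne_0_3 ne_0_4 ne_0_5 ne_1_2 ne_1_3 ne_1_4 ne_1_5 ne_2_3 ne_2_4 ne_2_5 ne_3_4 ne_3_5 ne_4_5 by auto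

definition Good :: "nat set set" where
  "Good = {{0,1,3},{0,2,4},{0,3,5},{0,1,4},{0,2,5},{1,2,4},{2,3,5},{1,3,4},{2,4,5},{1,3,5}}"

lemma good43: "\<forall>I\<in>Pow {0..<6::nat}. card I = 4 \<longrightarrow> (\<exists>J\<in>Good. J \<subseteq> I)"
  unfolding Good_def by code_simp

lemma good_card: "\<forall>J\<in>Good. card J = 3 \<and> J \<subseteq> {0..<6}"
  unfolding Good_def by code_simp

lemma good_pairs: "\<forall>i\<in>{0..<6::nat}. \<forall>j\<in>{0..<6}. \<exists>J\<in>Good. i \<in> J \<and> j \<in> J"
  unfolding Good_def by code_simp

lemma good_ne: assumes "J \<in> Good" shows "\<exists>p. \<forall>i\<in>J. p \<in> S i"
  using assms unfolding Good_def
  apply (simp only: insert_iff empty_iff simp_thms)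
  apply (elim disjE)
  apply (rule exI[of _ "(vector[42,14] :: real^2)"], simp add: S_simps mems)
  apply (rule exI[of _ "(vector[-42,14] :: real^2)"], simp add: S_simps mems)
  apply (rule exI[of _ "(vector[28,-28] :: real^2)"], simp add: S_simps mems)
  apply (rule exI[of _ "(vector[0,42] :: real^2)"], simp add: S_simps mems)
  apply (rule exI[of _ "(vector[-28,-28] :: real^2)"], simp add: S_simps mems)
  apply (rule exI[of _ "(vector[-66,86] :: real^2)"], simp add: S_simps mems)
  apply (rule exI[of _ "(vector[0,-112] :: real^2)"], simp add: S_simps mems)
  apply (rule exI[of _ "(vector[66,86] :: real^2)"], simp add: S_simps mems)
  apply (rule exI[of _ "(vector[-105,-28] :: real^2)"], simp add: S_simps mems)
  apply (rule exI[of _ "(vector[105,-28] :: real^2)"], simp add: S_simps mems)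
  done

lemma arc0: "orient_sets A0 A1 Dset = 1"
proof (rule orient_sets_pos)
  show "A0 \<inter> A1 \<inter> Dset = {}" by (auto simp: mems)
  show "A1 \<inter> Dset \<noteq> {}" by (rule ex_in_conv[THEN iffD1], rule exI[of _ "(vector[-42,14] :: real^2)"], simp add: mems)
  show "A0 \<inter> Dset \<noteq> {}" by (rule ex_in_conv[THEN iffD1], rule exI[of _ "(vector[0,42] :: real^2)"], simp add: mems)
  show "A0 \<inter> A1 \<noteq> {}" by (rule ex_in_conv[THEN iffD1], rule exI[of _ "(vector[-66,86] :: real^2)"], simp add: mems)
  fix x y z assume x: "x \<in> A1 \<inter> Dset" and y: "y \<in> A0 \<inter> Dset" and z: "z \<in> A0 \<inter> A1"
  show "(y$1 - x$1) * (z$2 - x$2) - (y$2 - x$2) * (z$1 - x$1) > 0"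
    apply (rule key[where pa="-3" and pb="-1" and pc="112" and qa="2" and qb="3" and qc="126"])
    using x y z by (simp_all add: mems)
qed

lemma arc1: "orient_sets A1 A2 Dset = 1"
proof (rule orient_sets_pos)
  show "A1 \<inter> A2 \<inter> Dset = {}" by (auto simp: mems)
  show "A2 \<inter> Dset \<noteq> {}" by (rule ex_in_conv[THEN iffD1], rule exI[of _ "(vector[28,-28] :: real^2)"], simp add: mems)
  show "A1 \<inter> Dset \<noteq> {}" by (rule ex_in_conv[THEN iffD1], rule exI[of _ "(vector[-28,-28] :: real^2)"], simp add: mems)
  show "A1 \<inter> A2 \<noteq> {}" by (rule ex_in_conv[THEN iffD1], rule exI[of _ "(vector[0,-112] :: real^2)"], simp add: mems)
  fix x y z assume x: "x \<in> A2 \<inter> Dset" and y: "y \<in> A1 \<inter> Dset" and z: "z \<in> A1 \<inter> A2"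
  show "(y$1 - x$1) * (z$2 - x$2) - (y$2 - x$2) * (z$1 - x$1) > 0"
    apply (rule key[where pa="3" and pb="-1" and pc="112" and qa="-3" and qb="-1" and qc="112"])
    using x y z by (simp_all add: mems)
qed

lemma arc2: "orient_sets A2 A3 Dset = 1"
proof (rule orient_sets_pos)
  show "A2 \<inter> A3 \<inter> Dset = {}" by (auto simp: mems)
  show "A3 \<inter> Dset \<noteq> {}" by (rule ex_in_conv[THEN iffD1], rule exI[of _ "(vector[0,42] :: real^2)"], simp add: mems)
  show "A2 \<inter> Dset \<noteq> {}" by (rule ex_in_conv[THEN iffD1], rule exI[of _ "(vector[42,14] :: real^2)"], simp add: mems)
  show "A2 \<inter> A3 \<noteq> {}" by (rule ex_in_conv[THEN iffD1], rule exI[of _ "(vector[66,86] :: real^2)"], simp add: mems)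
  fix x y z assume x: "x \<in> A3 \<inter> Dset" and y: "y \<in> A2 \<inter> Dset" and z: "z \<in> A2 \<inter> A3"
  show "(y$1 - x$1) * (z$2 - x$2) - (y$2 - x$2) * (z$1 - x$1) > 0"
    apply (rule key[where pa="-2" and pb="3" and pc="126" and qa="3" and qb="-1" and qc="112"])
    using x y z by (simp_all add: mems)
qed

lemma arc3: "orient_sets A3 A4 Dset = 1"
proof (rule orient_sets_pos)
  show "A3 \<inter> A4 \<inter> Dset = {}" by (auto simp: mems)
  show "A4 \<inter> Dset \<noteq> {}" by (rule ex_in_conv[THEN iffD1], rule exI[of _ "(vector[-28,-28] :: real^2)"], simp add: mems)
  show "A3 \<inter> Dset \<noteq> {}" by (rule ex_in_conv[THEN iffD1], rule exI[of _ "(vector[-42,14] :: real^2)"], simp add: mems)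
  show "A3 \<inter> A4 \<noteq> {}" by (rule ex_in_conv[THEN iffD1], rule exI[of _ "(vector[-105,-28] :: real^2)"], simp add: mems)
  fix x y z assume x: "x \<in> A4 \<inter> Dset" and y: "y \<in> A3 \<inter> Dset" and z: "z \<in> A3 \<inter> A4"
  show "(y$1 - x$1) * (z$2 - x$2) - (y$2 - x$2) * (z$1 - x$1) > 0"
    apply (rule key[where pa="0" and pb="-4" and pc="112" and qa="-2" and qb="3" and qc="126"])
    using x y z by (simp_all add: mems)
qed

lemma arc4: "orient_sets A4 A0 Dset = 1"
proof (rule orient_sets_pos)
  show "A4 \<inter> A0 \<inter> Dset = {}" by (auto simp: mems)
  show "A0 \<inter> Dset \<noteq> {}" by (rule ex_in_conv[THEN iffD1], rule exI[of _ "(vector[42,14] :: real^2)"], simp add: mems)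
  show "A4 \<inter> Dset \<noteq> {}" by (rule ex_in_conv[THEN iffD1], rule exI[of _ "(vector[28,-28] :: real^2)"], simp add: mems)
  show "A4 \<inter> A0 \<noteq> {}" by (rule ex_in_conv[THEN iffD1], rule exI[of _ "(vector[105,-28] :: real^2)"], simp add: mems)
  fix x y z assume x: "x \<in> A0 \<inter> Dset" and y: "y \<in> A4 \<inter> Dset" and z: "z \<in> A4 \<inter> A0"
  show "(y$1 - x$1) * (z$2 - x$2) - (y$2 - x$2) * (z$1 - x$1) > 0"
    apply (rule key[where pa="2" and pb="3" and pc="126" and qa="0" and qb="-4" and qc="112"])
    using x y z by (simp_all add: mems)
qed

lemma Sne: "Dset \<noteq> A0" "Dset \<noteq> A1" "Dset \<noteq> A2" "Dset \<noteq> A3" "Dset \<noteq> A4"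
  using ne_0_1 ne_0_2 ne_0_3 ne_0_4 ne_0_5 by (simp_all add: S_simps)

lemma S_simps2: "S (Suc 1) = A1" "S (Suc 2) = A2" "S (Suc 3) = A3" "S (Suc 4) = A4"
  "S (Suc (Suc 0)) = A1" "S (Suc (Suc (Suc 0))) = A2" "S (Suc (Suc (Suc (Suc 0)))) = A3"
  "S (Suc (Suc (Suc (Suc (Suc 0))))) = A4"
  by (simp_all add: S_def numeral_eq_Suc)

lemma F_eq: "S ` {0..<6} = {Dset, A0, A1, A2, A3, A4}"
  unfolding six by (simp add: S_simps)

lemma S_in: "i < 6 \<Longrightarrow> S i \<in> S ` {0..<6}" by auto

lemma prop43_F: "prop_43 (S ` {0..<6})"
  unfolding prop_43_def
proof (intro allI impI)
  fix G assume G: "G \<subseteq> S ` {0..<6}" "card G = 4"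
  define I where "I = {i\<in>{0..<6}. S i \<in> G}"
  have GI: "G = S ` I" using G(1) unfolding I_def by auto
  have injI: "inj_on S I" using injS by (rule inj_on_subset) (auto simp: I_def)
  have "card I = 4" using G(2) GI card_image[OF injI] by simp
  moreover have "I \<in> Pow {0..<6}" unfolding I_def by auto
  ultimately obtain J where J: "J \<in> Good" "J \<subseteq> I" using good43 by blast
  have J3: "card J = 3" using good_card J(1) by blast
  obtain p where p: "\<forall>i\<in>J. p \<in> S i" using good_ne[OF J(1)] by blast
  have "S ` J \<subseteq> G" using GI J(2) by auto
  moreover have "card (S ` J) = 3" using J3 card_image[OF inj_on_subset[OF injI J(2)]] by simp
  moreover have "p \<in> \<Inter> (S ` J)" using p by auto
  ultimately show "\<exists>H\<subseteq>G. card H = 3 \<and> \<Inter> H \<noteq> {}" by blast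
qed

lemma pw_F: "pairwise_intersecting (S ` {0..<6})"
  unfolding pairwise_intersecting_def
proof (intro ballI)
  fix A B assume "A \<in> S ` {0..<6}" "B \<in> S ` {0..<6}"
  then obtain i j where ij: "i \<in> {0..<6}" "j \<in> {0..<6}" "A = S i" "B = S j" by auto
  obtain J where J: "J \<in> Good" "i \<in> J" "j \<in> J" using good_pairs ij(1,2) by blast
  obtain p where "\<forall>i\<in>J. p \<in> S i" using good_ne[OF J(1)] by blast
  then have "p \<in> A \<inter> B" using J ij by auto
  then show "A \<inter> B \<noteq> {}" by blast
qed

lemma cpt: "compact Dset" "compact A0" "compact A1" "compact A2" "compact A3" "compact A4"
  unfolding Dset_def A0_def A1_def A2_def A3_def A4_def by (rule compact_poly)+

lemma cvx: "convex Dset" "convex A0" "convex A1" "convex A2" "convex A3" "convex A4"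
  unfolding Dset_def A0_def A1_def A2_def A3_def A4_def by (rule convex_poly)+

lemma cc_F: "\<forall>A\<in>S ` {0..<6}. compact A \<and> convex A"
  unfolding F_eq using cpt cvx by simp

lemma inj_c: "inj_on (\<lambda>i. S (Suc i)) {0..<5}"
  proof (rule inj_onI)
    fix a b assume ab: "a \<in> {0..<5::nat}" "b \<in> {0..<5::nat}" and eq: "S (Suc a) = S (Suc b)"
    have ina: "Suc a \<in> {0..<6}" and inb: "Suc b \<in> {0..<6}" using ab by auto
    have "Suc a = Suc b" by (rule inj_onD[OF injS eq ina inb])
    then show "a = b" by simp
  qed

lemma arcs_c: "\<forall>i<5. arc_G (S ` {0..<6}) Dset (S (Suc i)) (S (Suc ((i + 1) mod 5)))"
  proof (intro allI impI)
    fix i :: nat assume "i < 5"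
    then have "i = 0 \<or> i = 1 \<or> i = 2 \<or> i = 3 \<or> i = 4" by auto
    then show "arc_G (S ` {0..<6}) Dset (S (Suc i)) (S (Suc ((i + 1) mod 5)))"
      unfolding arc_G_def F_eq
      by (elim disjE; simp add: S_simps S_simps2 Sne Sne[symmetric] arc0 arc1 arc2 arc3 arc4)
  qed

theorem claim9:
  shows "\<exists>(F :: (real^2) set set) D.
     finite F \<and> (\<forall>A\<in>F. compact A \<and> convex A) \<and> pairwise_intersecting F \<and> prop_43 F \<and>
     D \<in> F \<and>
     (\<exists>c :: nat \<Rightarrow> (real^2) set. inj_on c {0..<5} \<and>
        (\<forall>i<5. arc_G F D (c i) (c ((i + 1) mod 5))))"
proof -
  have fin: "finite (S ` {0..<6})" by simp
  have DF: "Dset \<in> S ` {0..<6}" unfolding F_eq by simp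
  have cyc: "\<exists>c :: nat \<Rightarrow> (real^2) set. inj_on c {0..<5} \<and>
        (\<forall>i<5. arc_G (S ` {0..<6}) Dset (c i) (c ((i + 1) mod 5)))"
    by (rule exI[of _ "\<lambda>i. S (Suc i)"], rule conjI[OF inj_c arcs_c])
  show ?thesis
    apply (rule exI[of _ "S ` {0..<6}"])
    apply (rule exI[of _ Dset])
    using fin cc_F pw_F prop43_F DF cyc by blast
qed

end
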